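(* Let $V$ be a finite set and $\{\eta(t),t\ge0\}$ a consistent configuration process on $\Omega$. Then for all $f:\Omega\to\mathbb R$, all $\eta\in\Omega$ and all $t\ge0$, $$\sum_{i\in V}\mathbb E_\eta\big[\eta_i(t)f(\eta(t)-\delta_i)\big]=\sum_{i\in V}\eta_i\,\mathbb E_{\eta-\delta_i}\big[f(\eta(t))\big],$$ where terms with $\eta_i(t)=0$, resp. $\eta_i=0$, are zero.
   Context: $\Lambda\subseteq\mathbb N_0$ is the single-site state space, $\Omega=\{\eta\in\Lambda^V:\sum_x\eta_x<\infty\}$, $\delta_z$ the configuration with one particle at $z$. A configuration process is a Markov process on $\Omega$ conserving the number of particles, with generator $\mathcal L$; $\mathbb E_\eta$ denotes expectation for the process started at $\eta$. It is consistent if $[\mathcal L,\mathcal A]=0$, where $\mathcal Af(\eta)=\sum_{x\in V}\eta_xf(\eta-\delta_x)$ (terms with $\eta_x=0$ are zero). *)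

theory Defs
  imports "HOL-Analysis.Analysis"
begin

type_synonym 'v conf = "'v \<Rightarrow> nat"

definition Omega :: "nat set \<Rightarrow> 'v conf set" where
  "Omega Lam = {\<eta>. \<forall>x. \<eta> x \<in> Lam}"

text \<open>eta - delta_x (only used when eta x > 0, or multiplied by eta x = 0)\<close>
definition minus_delta :: "'v conf \<Rightarrow> 'v \<Rightarrow> 'v conf" where
  "minus_delta \<eta> x = \<eta>(x := \<eta> x - 1)"

definition total :: "('v::finite) conf \<Rightarrow> nat" where
  "total \<eta> = (\<Sum>x\<in>UNIV. \<eta> x)"

definition sector :: "nat set \<Rightarrow> ('v::finite) conf \<Rightarrow> 'v conf set" where
  "sector Lam \<eta> = {\<zeta> \<in> Omega Lam. total \<zeta> = total \<eta>}"

definition gen :: "nat set \<Rightarrow> (('v::finite) conf \<Rightarrow> 'v conf \<Rightarrow> real)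
     \<Rightarrow> ('v conf \<Rightarrow> real) \<Rightarrow> 'v conf \<Rightarrow> real" where
  "gen Lam q f \<eta> = (\<Sum>\<zeta>\<in>sector Lam \<eta>. q \<eta> \<zeta> * (f \<zeta> - f \<eta>))"

definition annih :: "(('v::finite) conf \<Rightarrow> real) \<Rightarrow> 'v conf \<Rightarrow> real" where
  "annih f \<eta> = (\<Sum>x\<in>UNIV. real (\<eta> x) * f (minus_delta \<eta> x))"

definition consistent :: "nat set \<Rightarrow> (('v::finite) conf \<Rightarrow> 'v conf \<Rightarrow> real) \<Rightarrow> bool" where
  "consistent Lam q \<longleftrightarrow>
     (\<forall>f. \<forall>\<eta>\<in>Omega Lam. gen Lam q (annih f) \<eta> = annih (gen Lam q f) \<eta>)"

text \<open>p t eta xi = P_eta(eta(t) = xi): the transition function of the configuration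
  process with jump rates q (generator gen Lam q), characterised as the solution of
  Kolmogorov's backward equation on the (finite) particle-number sectors.\<close>
definition config_process :: "nat set \<Rightarrow> (('v::finite) conf \<Rightarrow> 'v conf \<Rightarrow> real)
     \<Rightarrow> (real \<Rightarrow> 'v conf \<Rightarrow> 'v conf \<Rightarrow> real) \<Rightarrow> bool" where
  "config_process Lam q p \<longleftrightarrow>
     (\<forall>\<eta>\<in>Omega Lam. \<forall>\<zeta>\<in>sector Lam \<eta>. \<zeta> \<noteq> \<eta> \<longrightarrow> q \<eta> \<zeta> \<ge> 0) \<and>
     (\<forall>\<eta>\<in>Omega Lam. \<forall>\<xi>. p 0 \<eta> \<xi> = (if \<xi> = \<eta> then 1 else 0)) \<and>
     (\<forall>\<eta>\<in>Omega Lam. \<forall>t\<ge>0. \<forall>\<xi>. \<xi> \<notin> sector Lam \<eta> \<longrightarrow> p t \<eta> \<xi> = 0) \<and>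
     (\<forall>\<eta>\<in>Omega Lam. \<forall>t\<ge>0. \<forall>\<xi>. p t \<eta> \<xi> \<ge> 0) \<and>
     (\<forall>\<eta>\<in>Omega Lam. \<forall>t\<ge>0. (\<Sum>\<xi>\<in>sector Lam \<eta>. p t \<eta> \<xi>) = 1) \<and>
     (\<forall>\<eta>\<in>Omega Lam. \<forall>\<xi>. \<forall>t\<ge>0.
        ((\<lambda>s. p s \<eta> \<xi>) has_real_derivative
           (\<Sum>\<zeta>\<in>sector Lam \<eta>. q \<eta> \<zeta> * (p t \<zeta> \<xi> - p t \<eta> \<xi>))) (at t within {0..}))"

definition expect :: "nat set \<Rightarrow> (real \<Rightarrow> ('v::finite) conf \<Rightarrow> 'v conf \<Rightarrow> real)
     \<Rightarrow> real \<Rightarrow> 'v conf \<Rightarrow> ('v conf \<Rightarrow> real) \<Rightarrow> real" where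
  "expect Lam p t \<eta> g = (\<Sum>\<xi>\<in>sector Lam \<eta>. p t \<eta> \<xi> * g \<xi>)"

end

theory Submission
  imports Defs
begin

lemma sector_finite: "finite (sector Lam (\<eta>::('v::finite) conf))"
proof -
  have "sector Lam \<eta> \<subseteq> (\<Pi>\<^sub>E i \<in> UNIV. {..total \<eta>})"
  proof
    fix \<zeta> assume z: "\<zeta> \<in> sector Lam \<eta>"
    have "\<zeta> x \<le> total \<eta>" for x
    proof -
      have "\<zeta> x \<le> total \<zeta>" unfolding total_def by (rule member_le_sum) auto
      thus ?thesis using z by (simp add: sector_def)
    qed
    thus "\<zeta> \<in> (\<Pi>\<^sub>E i \<in> UNIV. {..total \<eta>})" by auto
  qed
  moreover have "finite (\<Pi>\<^sub>E i \<in> (UNIV::'v set). {..total \<eta>})"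
    by (rule finite_PiE) auto
  ultimately show ?thesis by (rule finite_subset)
qed

lemma sector_same: "\<zeta> \<in> sector Lam \<eta> \<Longrightarrow> sector Lam \<zeta> = sector Lam \<eta>"
  by (auto simp: sector_def)

lemma self_sector: "\<eta> \<in> Omega Lam \<Longrightarrow> \<eta> \<in> sector Lam \<eta>"
  by (auto simp: sector_def)

lemma sector_Omega: "\<zeta> \<in> sector Lam \<eta> \<Longrightarrow> \<zeta> \<in> Omega Lam"
  by (auto simp: sector_def)

lemma md_Omega:
  assumes Lam_down: "\<And>n. Suc n \<in> Lam \<Longrightarrow> n \<in> Lam" and e: "\<eta> \<in> Omega Lam"
  shows "minus_delta \<eta> x \<in> Omega Lam"
proof -
  have "\<eta> x - 1 \<in> Lam"
  proof (cases "\<eta> x")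
    case 0
    have "\<eta> x \<in> Lam" using e by (simp add: Omega_def)
    then show ?thesis using 0 by simp
  next
    case (Suc n)
    have "\<eta> x \<in> Lam" using e by (simp add: Omega_def)
    then show ?thesis using Suc Lam_down[of n] by simp
  qed
  thus ?thesis using e by (auto simp: Omega_def minus_delta_def)
qed

lemma deriv_S:
  assumes proc: "config_process Lam q p" and z: "\<zeta> \<in> Omega Lam" and s: "s \<ge> 0"
  shows "((\<lambda>s. expect Lam p s \<zeta> g) has_real_derivative
           gen Lam q (\<lambda>y. expect Lam p s y g) \<zeta>) (at s within {0..})"
proof -
  let ?K = "sector Lam \<zeta>"
  define D where "D \<xi> = (\<Sum>y\<in>?K. q \<zeta> y * (p s y \<xi> - p s \<zeta> \<xi>))" for \<xi>
  have H: "((\<lambda>s. p s \<zeta> \<xi>) has_real_derivative D \<xi>) (at s within {0..})" for \<xi>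
    using proc z s unfolding config_process_def D_def by blast
  have "((\<lambda>s. \<Sum>\<xi>\<in>?K. p s \<zeta> \<xi> * g \<xi>) has_real_derivative (\<Sum>\<xi>\<in>?K. D \<xi> * g \<xi>)) (at s within {0..})"
    by (intro DERIV_sum DERIV_cmult_right H)
  moreover have "(\<Sum>\<xi>\<in>?K. D \<xi> * g \<xi>) = gen Lam q (\<lambda>y. expect Lam p s y g) \<zeta>"
  proof -
    have "(\<Sum>\<xi>\<in>?K. D \<xi> * g \<xi>) = (\<Sum>\<xi>\<in>?K. \<Sum>y\<in>?K. q \<zeta> y * (p s y \<xi> * g \<xi> - p s \<zeta> \<xi> * g \<xi>))"
      unfolding D_def sum_distrib_right by (intro sum.cong refl) (simp add: algebra_simps)
    also have "\<dots> = (\<Sum>y\<in>?K. \<Sum>\<xi>\<in>?K. q \<zeta> y * (p s y \<xi> * g \<xi> - p s \<zeta> \<xi> * g \<xi>))"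
      by (rule sum.swap)
    also have "\<dots> = (\<Sum>y\<in>?K. q \<zeta> y * ((\<Sum>\<xi>\<in>?K. p s y \<xi> * g \<xi>) - (\<Sum>\<xi>\<in>?K. p s \<zeta> \<xi> * g \<xi>)))"
      by (intro sum.cong refl) (simp only: sum_distrib_left[symmetric] sum_subtractf)
    also have "\<dots> = gen Lam q (\<lambda>y. expect Lam p s y g) \<zeta>"
      unfolding gen_def expect_def
      by (intro sum.cong refl) (simp add: sector_same)
    finally show ?thesis .
  qed
  ultimately show ?thesis unfolding expect_def by simp
qed

lemma term_bound:
  fixes a b c Q :: real
  assumes "\<bar>c\<bar> \<le> Q"
  shows "2 * a * (c * (b - a)) \<le> 3 * Q * (a\<^sup>2 + b\<^sup>2)"
proof -
  have "2 * a * (c * (b - a)) \<le> \<bar>c\<bar> * (2 * \<bar>a\<bar> * \<bar>b - a\<bar>)"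
  proof -
    have "2 * a * (c * (b - a)) \<le> \<bar>2 * a * (c * (b - a))\<bar>" by (rule abs_ge_self)
    also have "\<dots> = \<bar>c\<bar> * (2 * \<bar>a\<bar> * \<bar>b - a\<bar>)" by (simp add: abs_mult)
    finally show ?thesis .
  qed
  also have "2 * \<bar>a\<bar> * \<bar>b - a\<bar> \<le> 3 * (a\<^sup>2 + b\<^sup>2)"
  proof -
    have "\<bar>b - a\<bar> \<le> \<bar>a\<bar> + \<bar>b\<bar>" by linarith
    hence "2 * \<bar>a\<bar> * \<bar>b - a\<bar> \<le> 2 * \<bar>a\<bar> * (\<bar>a\<bar> + \<bar>b\<bar>)" by (simp add: mult_left_mono)
    also have "\<dots> \<le> 3 * (a\<^sup>2 + b\<^sup>2)"
    proof -
      have "0 \<le> (\<bar>a\<bar> - \<bar>b\<bar>)\<^sup>2" by simp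
      hence "2 * \<bar>a\<bar> * \<bar>b\<bar> \<le> \<bar>a\<bar>\<^sup>2 + \<bar>b\<bar>\<^sup>2" by (simp add: power2_diff)
      hence "2 * \<bar>a\<bar> * \<bar>b\<bar> \<le> a\<^sup>2 + b\<^sup>2" by simp
      moreover have "\<bar>a\<bar> * \<bar>a\<bar> = a\<^sup>2" by (simp add: power2_eq_square abs_mult_self_eq)
      moreover have "0 \<le> b\<^sup>2" by simp
      moreover have "2 * \<bar>a\<bar> * (\<bar>a\<bar> + \<bar>b\<bar>) = 2 * (\<bar>a\<bar> * \<bar>a\<bar>) + 2 * \<bar>a\<bar> * \<bar>b\<bar>"
        by (simp add: algebra_simps)
      moreover have "3 * (a\<^sup>2 + b\<^sup>2) = 3*a\<^sup>2 + 3*b\<^sup>2" "0 \<le> a\<^sup>2" by simp_all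
      ultimately show ?thesis by linarith
    qed
    finally show ?thesis .
  qed
  note h = this
  have "\<bar>c\<bar> * (2 * \<bar>a\<bar> * \<bar>b - a\<bar>) \<le> Q * (3 * (a\<^sup>2 + b\<^sup>2))"
    by (rule mult_mono[OF assms h]) (use assms in auto)
  finally show ?thesis by (simp add: algebra_simps)
qed

theorem proposition3p5:
  fixes Lam :: "nat set"
    and q :: "('v::finite) conf \<Rightarrow> 'v conf \<Rightarrow> real"
    and p :: "real \<Rightarrow> 'v conf \<Rightarrow> 'v conf \<Rightarrow> real"
    and f :: "'v conf \<Rightarrow> real"
    and \<eta> :: "'v conf" and t :: real
  assumes Lam0: "0 \<in> Lam"
    and Lam_down: "\<And>n. Suc n \<in> Lam \<Longrightarrow> n \<in> Lam"
    and proc: "config_process Lam q p"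
    and cons: "consistent Lam q"
    and eta: "\<eta> \<in> Omega Lam"
    and t: "t \<ge> 0"
  shows "(\<Sum>i\<in>UNIV. expect Lam p t \<eta> (\<lambda>\<xi>. real (\<xi> i) * f (minus_delta \<xi> i)))
       = (\<Sum>i\<in>UNIV. real (\<eta> i) * expect Lam p t (minus_delta \<eta> i) f)"
proof -
  let ?K = "sector Lam \<eta>"
  define S where "S = (\<lambda>s g z. expect Lam p s z g)"
  define u where "u = (\<lambda>s. S s (annih f))"
  define w where "w = (\<lambda>s. annih (S s f))"
  define d where "d = (\<lambda>s z. u s z - w s z)"
  have finK: "finite ?K" by (rule sector_finite)
  have etaK: "\<eta> \<in> ?K" using eta by (rule self_sector)
  have dS: "((\<lambda>s. S s g z) has_real_derivative gen Lam q (S s g) z) (at s within {0..})"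
    if "z \<in> Omega Lam" "s \<ge> 0" for z g s
    unfolding S_def using deriv_S[OF proc that] by simp
  have du: "((\<lambda>s. u s z) has_real_derivative gen Lam q (u s) z) (at s within {0..})"
    if "z \<in> Omega Lam" "s \<ge> 0" for z s
    unfolding u_def using dS[OF that] by simp
  have dw: "((\<lambda>s. w s z) has_real_derivative gen Lam q (w s) z) (at s within {0..})"
    if z: "z \<in> Omega Lam" and s: "s \<ge> 0" for z s
  proof -
    have "((\<lambda>s. \<Sum>x\<in>UNIV. real (z x) * S s f (minus_delta z x)) has_real_derivative
       (\<Sum>x\<in>UNIV. real (z x) * gen Lam q (S s f) (minus_delta z x))) (at s within {0..})"
      by (rule DERIV_sum, rule DERIV_cmult, rule dS[OF md_Omega[OF Lam_down z] s])
    moreover have "(\<Sum>x\<in>UNIV. real (z x) * gen Lam q (S s f) (minus_delta z x))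
        = gen Lam q (w s) z"
    proof -
      have "(\<Sum>x\<in>UNIV. real (z x) * gen Lam q (S s f) (minus_delta z x))
          = annih (gen Lam q (S s f)) z" by (simp add: annih_def)
      also have "\<dots> = gen Lam q (annih (S s f)) z"
        using cons z unfolding consistent_def by metis
      finally show ?thesis by (simp add: w_def)
    qed
    ultimately show ?thesis by (simp add: w_def annih_def)
  qed
  have dd: "((\<lambda>s. d s z) has_real_derivative (\<Sum>y\<in>?K. q z y * (d s y - d s z))) (at s within {0..})"
    if z: "z \<in> ?K" and s: "s \<ge> 0" for z s
  proof -
    have zO: "z \<in> Omega Lam" using z by (rule sector_Omega)
    have "((\<lambda>s. d s z) has_real_derivative gen Lam q (u s) z - gen Lam q (w s) z) (at s within {0..})"
      unfolding d_def by (rule DERIV_diff[OF du[OF zO s] dw[OF zO s]])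
    moreover have "gen Lam q (u s) z - gen Lam q (w s) z = (\<Sum>y\<in>?K. q z y * (d s y - d s z))"
      unfolding gen_def d_def sector_same[OF z] sum_subtractf[symmetric]
      by (intro sum.cong refl) (simp add: algebra_simps)
    ultimately show ?thesis by simp
  qed
  define G where "G = (\<lambda>s z. (\<Sum>y\<in>?K. q z y * (d s y - d s z)))"
  define N where "N = (\<lambda>s. \<Sum>z\<in>?K. (d s z)\<^sup>2)"
  define N' where "N' = (\<lambda>s. \<Sum>z\<in>?K. 2 * d s z * G s z)"
  have dN: "(N has_real_derivative N' s) (at s within {0..})" if s: "s \<ge> 0" for s
  proof -
    have "((\<lambda>s. \<Sum>z\<in>?K. (d s z)\<^sup>2) has_real_derivative
        (\<Sum>z\<in>?K. of_nat 2 * (G s z * d s z ^ (2 - Suc 0)))) (at s within {0..})"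
      by (rule DERIV_sum, rule DERIV_power) (use dd s in \<open>simp add: G_def\<close>)
    thus ?thesis unfolding N_def N'_def by (simp add: algebra_simps)
  qed
  define Q where "Q = (\<Sum>z\<in>?K. \<Sum>y\<in>?K. \<bar>q z y\<bar>)"
  have Qb: "\<bar>q z y\<bar> \<le> Q" if "z \<in> ?K" "y \<in> ?K" for z y
  proof -
    have "\<bar>q z y\<bar> \<le> (\<Sum>y\<in>?K. \<bar>q z y\<bar>)" by (rule member_le_sum) (use that finK in auto)
    also have "\<dots> \<le> Q" unfolding Q_def
      by (rule member_le_sum[where f = "\<lambda>z. \<Sum>y\<in>?K. \<bar>q z y\<bar>"]) (use that finK in \<open>auto intro: sum_nonneg\<close>)
    finally show ?thesis .
  qed
  define C where "C = 6 * Q * real (card ?K)"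
  have N'b: "N' s \<le> C * N s" for s
  proof -
    have "N' s = (\<Sum>z\<in>?K. \<Sum>y\<in>?K. 2 * d s z * (q z y * (d s y - d s z)))"
      unfolding N'_def G_def by (simp add: sum_distrib_left)
    also have "\<dots> \<le> (\<Sum>z\<in>?K. \<Sum>y\<in>?K. 3 * Q * ((d s z)\<^sup>2 + (d s y)\<^sup>2))"
      by (intro sum_mono term_bound Qb)
    also have "\<dots> = 3 * Q * ((\<Sum>z\<in>?K. \<Sum>y\<in>?K. (d s z)\<^sup>2) + (\<Sum>z\<in>?K. \<Sum>y\<in>?K. (d s y)\<^sup>2))"
      by (simp add: sum_distrib_left sum.distrib algebra_simps)
    also have "\<dots> = C * N s"
      unfolding C_def N_def by (simp add: algebra_simps sum_distrib_left)
    finally show ?thesis .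
  qed
  have Q0: "0 \<le> Q" unfolding Q_def by (intro sum_nonneg) auto
  have S0: "S 0 g z = g z" if "z \<in> Omega Lam" for g z
  proof -
    have "S 0 g z = (\<Sum>\<xi>\<in>sector Lam z. (if \<xi> = z then 1 else 0) * g \<xi>)"
      unfolding S_def expect_def using proc that unfolding config_process_def by simp
    also have "\<dots> = g z" using self_sector[OF that] sector_finite[of Lam z]
      by (subst sum.cong[OF refl, where h="\<lambda>\<xi>. if \<xi> = z then g \<xi> else 0"]) (auto simp: sum.delta')
    finally show ?thesis .
  qed
  have d0: "d 0 z = 0" if "z \<in> ?K" for z
  proof -
    have zO: "z \<in> Omega Lam" using that by (rule sector_Omega)
    have "u 0 z = annih f z" unfolding u_def using S0[OF zO] .
    moreover have "w 0 z = annih f z"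
      unfolding w_def annih_def using S0[OF md_Omega[OF Lam_down zO]] by simp
    ultimately show ?thesis unfolding d_def by simp
  qed
  define g where "g = (\<lambda>s. exp (- C * s) * N s)"
  have dg: "(g has_real_derivative exp (- C * s) * (N' s - C * N s)) (at s within {0..})"
    if s: "s \<ge> 0" for s
  proof -
    have e: "((\<lambda>s. exp (- C * s)) has_real_derivative exp (- C * s) * (- C)) (at s within {0..})"
      by (auto intro!: derivative_eq_intros)
    show ?thesis unfolding g_def
      by (rule DERIV_cong[OF DERIV_mult[OF e dN[OF s]]]) (simp add: algebra_simps)
  qed
  have "g t \<le> g 0"
  proof (rule DERIV_nonpos_imp_decreasing_open[OF t])
    fix x :: real assume x: "0 < x" "x < t"
    have "at x within {0..} = at x" by (rule at_within_interior) (use x in simp)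
    hence "DERIV g x :> exp (- C * x) * (N' x - C * N x)" using dg[of x] x by simp
    moreover have "exp (- C * x) * (N' x - C * N x) \<le> 0"
      using N'b[of x] by (intro mult_nonneg_nonpos) auto
    ultimately show "\<exists>y. DERIV g x :> y \<and> y \<le> 0" by blast
  next
    show "continuous_on {0..t} g"
      unfolding continuous_on_eq_continuous_within
    proof
      fix x assume "x \<in> {0..t}"
      hence "continuous (at x within {0..}) g" using dg[of x] by (auto intro: DERIV_continuous)
      thus "continuous (at x within {0..t}) g" by (rule continuous_within_subset) auto
    qed
  qed
  moreover have "g 0 = 0" unfolding g_def N_def using d0 by simp
  ultimately have "N t \<le> 0" unfolding g_def
    by (simp add: mult_le_0_iff)
  moreover have "0 \<le> N t" unfolding N_def by (intro sum_nonneg) auto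
  ultimately have "N t = 0" by simp
  hence "(d t \<eta>)\<^sup>2 = 0" unfolding N_def using finK etaK
    by (subst (asm) sum_nonneg_eq_0_iff) auto
  hence "u t \<eta> = w t \<eta>" unfolding d_def by simp
  moreover have "(\<Sum>i\<in>UNIV. expect Lam p t \<eta> (\<lambda>\<xi>. real (\<xi> i) * f (minus_delta \<xi> i))) = u t \<eta>"
    unfolding u_def S_def expect_def annih_def
    by (simp add: sum_distrib_left sum.swap[where A = UNIV])
  moreover have "(\<Sum>i\<in>UNIV. real (\<eta> i) * expect Lam p t (minus_delta \<eta> i) f) = w t \<eta>"
    unfolding w_def S_def annih_def ..
  ultimately show ?thesis by simp
qed

end
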